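(* Let $(X,\Sigma,\mu)$ be a semi-finite measure space, and let $E$ be the ideal in $\mathrm{L}^0(X,\Sigma,\mu)$ consisting of (equivalence classes of) measurable functions with $\sigma$-finite supports. Let $A$ be a subset of $E$. Then $A$ is closed in $E$ with respect to the topology of local convergence in measure if and only if $A$ contains the almost everywhere limits (in $E$) of all sequences in $A$.
   Context: $\mathrm{L}^0(X,\Sigma,\mu)$ is the vector lattice of measurable real functions modulo $\mu$-a.e. equality. A measure space is semi-finite if every set of infinite measure contains a measurable subset of finite positive measure. A net $(f_\alpha)$ converges locally in measure to $f$ if $\mu(\{t\in B: |f_\alpha(t)-f(t)|\geq\varepsilon\})\to0$ for every $\varepsilon>0$ and every $B\in\Sigma$ with $\mu(B)<\infty$. *)

theory Defs
  imports "HOL-Analysis.Analysis"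
begin

definition semi_finite_measure :: "'a measure \<Rightarrow> bool" where
  "semi_finite_measure M \<longleftrightarrow>
     (\<forall>S\<in>sets M. emeasure M S = \<infinity> \<longrightarrow>
        (\<exists>T\<in>sets M. T \<subseteq> S \<and> 0 < emeasure M T \<and> emeasure M T < \<infinity>))"

definition sigma_finite_support :: "'a measure \<Rightarrow> ('a \<Rightarrow> real) \<Rightarrow> bool" where
  "sigma_finite_support M f \<longleftrightarrow>
     (\<exists>C :: nat \<Rightarrow> 'a set. range C \<subseteq> sets M \<and> (\<forall>n. emeasure M (C n) < \<infinity>) \<and>
        {x \<in> space M. f x \<noteq> 0} \<subseteq> (\<Union>n. C n))"

text \<open>Representatives of the ideal E of L0 of functions with sigma-finite supports.\<close>
definition sfs_ideal :: "'a measure \<Rightarrow> ('a \<Rightarrow> real) set" where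
  "sfs_ideal M = {f \<in> borel_measurable M. sigma_finite_support M f}"

text \<open>A set of representatives is saturated (= a set of equivalence classes mod a.e.
  equality) inside E.\<close>
definition ae_saturated :: "'a measure \<Rightarrow> ('a \<Rightarrow> real) set \<Rightarrow> ('a \<Rightarrow> real) set \<Rightarrow> bool" where
  "ae_saturated M E A \<longleftrightarrow> (\<forall>f\<in>A. \<forall>g\<in>E. (AE x in M. f x = g x) \<longrightarrow> g \<in> A)"

text \<open>Convergence locally in measure of a net, given as a family indexed along a filter
  (the filter of tails of a directed set).\<close>
definition conv_loc_measure ::
  "'a measure \<Rightarrow> 'i filter \<Rightarrow> ('i \<Rightarrow> 'a \<Rightarrow> real) \<Rightarrow> ('a \<Rightarrow> real) \<Rightarrow> bool" where
  "conv_loc_measure M F fs f \<longleftrightarrow>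
     (\<forall>B\<in>sets M. emeasure M B < \<infinity> \<longrightarrow>
        (\<forall>\<epsilon>>0. ((\<lambda>i. emeasure M {t \<in> B. \<epsilon> \<le> \<bar>fs i t - f t\<bar>}) \<longlongrightarrow> 0) F))"

text \<open>Nets are represented
  by proper filters on the function space itself (identity family).\<close>
definition closed_loc_measure ::
  "'a measure \<Rightarrow> ('a \<Rightarrow> real) set \<Rightarrow> ('a \<Rightarrow> real) set \<Rightarrow> bool" where
  "closed_loc_measure M E A \<longleftrightarrow>
     (\<forall>(F :: ('a \<Rightarrow> real) filter) f. F \<noteq> bot \<and> eventually (\<lambda>g. g \<in> A) F \<and>
        conv_loc_measure M F (\<lambda>g. g) f \<and> f \<in> E \<longrightarrow> f \<in> A)"

end

theory Submission
  imports Defs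
begin

lemma ae_conv_imp_measure:
  assumes fsm: "\<And>n. fs n \<in> borel_measurable M" and fm: "f \<in> borel_measurable M"
    and ae: "AE x in M. (\<lambda>n. fs n x) \<longlonglongrightarrow> f x"
    and B: "B \<in> sets M" "emeasure M B < \<infinity>" and e: "(\<epsilon>::real) > 0"
  shows "(\<lambda>n. emeasure M {t \<in> B. \<epsilon> \<le> \<bar>fs n t - f t\<bar>}) \<longlonglongrightarrow> 0"
proof -
  define E where "E n = {t \<in> B. \<epsilon> \<le> \<bar>fs n t - f t\<bar>}" for n
  define G where "G n = (\<Union>k\<in>{n..}. E k)" for n
  have Es: "E n \<in> sets M" for n
    unfolding E_def using B(1) fsm[of n] fm by measurable
  have Gs: "G n \<in> sets M" for n unfolding G_def using Es by auto
  have GB: "G n \<subseteq> B" for n unfolding G_def E_def by auto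
  have dec: "decseq G" unfolding decseq_def G_def by (auto, meson atLeast_iff order_trans)
  have fin: "emeasure M (G n) \<noteq> \<infinity>" for n
    using le_less_trans[OF emeasure_mono[OF GB[of n] B(1)] B(2)] by (simp add: less_top)
  have lim: "(\<lambda>n. emeasure M (G n)) \<longlonglongrightarrow> emeasure M (\<Inter>n. G n)"
    by (rule Lim_emeasure_decseq) (use Gs dec fin in auto)
  have "AE x in M. x \<notin> (\<Inter>n. G n)"
    using ae
  proof eventually_elim
    case (elim x)
    then have "eventually (\<lambda>n. dist (fs n x) (f x) < \<epsilon>) sequentially"
      using e by (simp add: tendsto_iff)
    then obtain N where "\<And>n. n \<ge> N \<Longrightarrow> \<bar>fs n x - f x\<bar> < \<epsilon>"
      by (auto simp: eventually_sequentially dist_real_def)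
    then have "x \<notin> G N" unfolding G_def E_def by force
    then show ?case by auto
  qed
  moreover have "(\<Inter>n. G n) \<in> sets M" using Gs by auto
  moreover have "{x \<in> space M. \<not> x \<notin> (\<Inter>n. G n)} = (\<Inter>n. G n)"
    using GB[of 0] sets.sets_into_space[OF B(1)] by auto
  ultimately have "emeasure M (\<Inter>n. G n) = 0"
    using AE_iff_measurable[of "\<Inter>n. G n" M "\<lambda>x. x \<notin> (\<Inter>n. G n)"] by auto
  with lim have lim0: "(\<lambda>n. emeasure M (G n)) \<longlonglongrightarrow> 0" by simp
  have le: "emeasure M (E n) \<le> emeasure M (G n)" for n
    by (rule emeasure_mono) (use Gs[of n] in \<open>auto simp: G_def\<close>)
  show ?thesis
    unfolding E_def[symmetric]
    by (rule tendsto_sandwich[OF _ _ tendsto_const lim0]) (auto simp: le)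
qed

theorem corollary5p17:
  fixes M :: "'a measure" and A :: "('a \<Rightarrow> real) set"
  assumes "semi_finite_measure M"
    and "A \<subseteq> sfs_ideal M"
    and "ae_saturated M (sfs_ideal M) A"
  shows "closed_loc_measure M (sfs_ideal M) A \<longleftrightarrow>
    (\<forall>(fs :: nat \<Rightarrow> 'a \<Rightarrow> real) f. (\<forall>n. fs n \<in> A) \<and> f \<in> sfs_ideal M \<and>
        (AE x in M. (\<lambda>n. fs n x) \<longlonglongrightarrow> f x) \<longrightarrow> f \<in> A)"
proof
  assume cl: "closed_loc_measure M (sfs_ideal M) A"
  show "\<forall>(fs :: nat \<Rightarrow> 'a \<Rightarrow> real) f. (\<forall>n. fs n \<in> A) \<and> f \<in> sfs_ideal M \<and>
        (AE x in M. (\<lambda>n. fs n x) \<longlonglongrightarrow> f x) \<longrightarrow> f \<in> A"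
  proof (intro allI impI, elim conjE)
    fix fs :: "nat \<Rightarrow> 'a \<Rightarrow> real" and f
    assume fsA: "\<forall>n. fs n \<in> A" and f: "f \<in> sfs_ideal M" and ae: "AE x in M. (\<lambda>n. fs n x) \<longlonglongrightarrow> f x"
    have fsm: "fs n \<in> borel_measurable M" for n using fsA assms(2) by (auto simp: sfs_ideal_def)
    have fm: "f \<in> borel_measurable M" using f by (auto simp: sfs_ideal_def)
    let ?F = "filtermap fs sequentially"
    have "?F \<noteq> bot" by (simp add: filtermap_bot_iff)
    moreover have "eventually (\<lambda>g. g \<in> A) ?F" using fsA by (simp add: eventually_filtermap)
    moreover have "conv_loc_measure M ?F (\<lambda>g. g) f"
      unfolding conv_loc_measure_def
    proof (intro ballI impI allI)
      fix B :: "'a set" and e :: real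
      assume "B \<in> sets M" "emeasure M B < \<infinity>" "0 < e"
      from ae_conv_imp_measure[OF fsm fm ae this]
      show "((\<lambda>i. emeasure M {t \<in> B. e \<le> \<bar>i t - f t\<bar>}) \<longlongrightarrow> 0) ?F"
        by (simp add: filterlim_filtermap o_def)
    qed
    ultimately show "f \<in> A" using cl f unfolding closed_loc_measure_def by blast
  qed
next
  assume H: "\<forall>(fs :: nat \<Rightarrow> 'a \<Rightarrow> real) f. (\<forall>n. fs n \<in> A) \<and> f \<in> sfs_ideal M \<and>
        (AE x in M. (\<lambda>n. fs n x) \<longlonglongrightarrow> f x) \<longrightarrow> f \<in> A"
  show "closed_loc_measure M (sfs_ideal M) A"
    unfolding closed_loc_measure_def
  proof (intro allI impI, elim conjE)
    fix F :: "('a \<Rightarrow> real) filter" and f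
    assume Fb: "F \<noteq> bot" and ev: "eventually (\<lambda>g. g \<in> A) F"
      and conv: "conv_loc_measure M F (\<lambda>g. g) f" and f: "f \<in> sfs_ideal M"
    define Cv where "Cv g = (SOME C :: nat \<Rightarrow> 'a set. range C \<subseteq> sets M \<and> (\<forall>n. emeasure M (C n) < \<infinity>) \<and>
        {x \<in> space M. g x \<noteq> 0} \<subseteq> (\<Union>n. C n))" for g :: "'a \<Rightarrow> real"
    have Cv: "range (Cv g) \<subseteq> sets M \<and> (\<forall>n. emeasure M (Cv g n) < \<infinity>) \<and>
        {x \<in> space M. g x \<noteq> 0} \<subseteq> (\<Union>n. Cv g n)" if "g \<in> sfs_ideal M" for g
    proof -
      have "sigma_finite_support M g" using that by (simp add: sfs_ideal_def)
      then have "\<exists>C :: nat \<Rightarrow> 'a set. range C \<subseteq> sets M \<and> (\<forall>n. emeasure M (C n) < \<infinity>) \<and>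
        {x \<in> space M. g x \<noteq> 0} \<subseteq> (\<Union>n. C n)" unfolding sigma_finite_support_def .
      then show ?thesis unfolding Cv_def by (rule someI_ex)
    qed
    define W where "W g k = (\<Union>i\<le>k. Cv g i)" for g k
    have Ws: "W g k \<in> sets M" "emeasure M (W g k) < \<infinity>" if "g \<in> sfs_ideal M" for g k
    proof -
      show "W g k \<in> sets M" using Cv[OF that] unfolding W_def by auto
      have "emeasure M (W g k) \<le> (\<Sum>i\<le>k. emeasure M (Cv g i))"
        unfolding W_def using Cv[OF that] by (intro emeasure_subadditive_finite) auto
      also have "\<dots> < \<infinity>" using Cv[OF that] by simp
      finally show "emeasure M (W g k) < \<infinity>" .
    qed
    define Bs where "Bs S k = W f k \<union> (\<Union>g\<in>S. W g k)" for S k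
    have Bs: "Bs S k \<in> sets M \<and> emeasure M (Bs S k) < \<infinity>" if "finite S" "S \<subseteq> sfs_ideal M" for S k
      using that
    proof (induction S rule: finite_induct)
      case empty then show ?case using Ws[OF f] by (simp add: Bs_def)
    next
      case (insert g S)
      have eq: "Bs (insert g S) k = W g k \<union> Bs S k" unfolding Bs_def by auto
      have "emeasure M (W g k \<union> Bs S k) \<le> emeasure M (W g k) + emeasure M (Bs S k)"
        using insert Ws[of g k] by (intro emeasure_subadditive) auto
      also have "\<dots> < \<infinity>" using insert Ws[of g k] by simp
      finally show ?case using eq insert Ws[of g k] by auto
    qed
    have cv: "((\<lambda>g. emeasure M {t \<in> B. e \<le> \<bar>g t - f t\<bar>}) \<longlongrightarrow> 0) F"
      if "B \<in> sets M" "emeasure M B < \<infinity>" "e > 0" for B e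
      using conv that unfolding conv_loc_measure_def by blast
    have exg: "\<exists>g\<in>A. emeasure M {t \<in> B. 1 / real (Suc k) \<le> \<bar>g t - f t\<bar>} < ennreal ((1/2)^k)"
      if "B \<in> sets M" "emeasure M B < \<infinity>" for B k
    proof -
      have "((\<lambda>g. emeasure M {t \<in> B. 1 / real (Suc k) \<le> \<bar>g t - f t\<bar>}) \<longlongrightarrow> 0) F"
        by (rule cv[OF that]) simp
      then have "eventually (\<lambda>g. emeasure M {t \<in> B. 1 / real (Suc k) \<le> \<bar>g t - f t\<bar>} < ennreal ((1/2)^k)) F"
        by (rule order_tendstoD) simp
      with ev have "eventually (\<lambda>g. g \<in> A \<and> emeasure M {t \<in> B. 1 / real (Suc k) \<le> \<bar>g t - f t\<bar>} < ennreal ((1/2)^k)) F"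
        by (rule eventually_conj)
      from eventually_happens[OF this] Fb show ?thesis by auto
    qed
    define pick where "pick S k = (SOME g. g \<in> A \<and> emeasure M {t \<in> Bs S k. 1 / real (Suc k) \<le> \<bar>g t - f t\<bar>} < ennreal ((1/2)^k))" for S k
    have pick: "pick S k \<in> A \<and> emeasure M {t \<in> Bs S k. 1 / real (Suc k) \<le> \<bar>pick S k t - f t\<bar>} < ennreal ((1/2)^k)"
      if "finite S" "S \<subseteq> A" for S k
    proof -
      have "S \<subseteq> sfs_ideal M" using that assms(2) by auto
      from exg[of "Bs S k" k] Bs[OF that(1) this] obtain g where
        "g \<in> A \<and> emeasure M {t \<in> Bs S k. 1 / real (Suc k) \<le> \<bar>g t - f t\<bar>} < ennreal ((1/2)^k)"
        by blast
      then show ?thesis unfolding pick_def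
        by (rule someI[where P="\<lambda>g. g \<in> A \<and> emeasure M {t \<in> Bs S k. 1 / real (Suc k) \<le> \<bar>g t - f t\<bar>} < ennreal ((1/2)^k)"])
    qed
    define SS where "SS = rec_nat {} (\<lambda>k S. insert (pick S k) S)"
    have SS0: "SS 0 = {}" and SSS: "SS (Suc k) = insert (pick (SS k) k) (SS k)" for k
      by (simp_all add: SS_def)
    have SSA: "finite (SS k) \<and> SS k \<subseteq> A" for k
      by (induction k) (auto simp: SS0 SSS pick)
    define gs where "gs k = pick (SS k) k" for k
    have gsA: "gs k \<in> A" for k using pick SSA unfolding gs_def by auto
    have gss: "gs k \<in> sfs_ideal M" for k using gsA assms(2) by auto
    have SSmono: "SS j \<subseteq> SS k" if "j \<le> k" for j k
      using that
    proof (induction k)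
      case 0 then show ?case by simp
    next
      case (Suc k) then show ?case by (cases "j = Suc k") (auto simp: SSS)
    qed
    have gsin: "gs j \<in> SS k" if "j < k" for j k
      using SSmono[of "Suc j" k] that by (auto simp: SSS gs_def)
    define E where "E k = {t \<in> Bs (SS k) k. 1 / real (Suc k) \<le> \<bar>gs k t - f t\<bar>}" for k
    have BsSS: "Bs (SS k) k \<in> sets M \<and> emeasure M (Bs (SS k) k) < \<infinity>" for k
      using Bs[of "SS k" k] SSA[of k] assms(2) by auto
    have fm: "f \<in> borel_measurable M" using f by (auto simp: sfs_ideal_def)
    have gsm: "gs k \<in> borel_measurable M" for k using gss by (auto simp: sfs_ideal_def)
    have Es: "E k \<in> sets M" for k
    proof -
      have [measurable]: "Bs (SS k) k \<in> sets M" "gs k \<in> borel_measurable M" "f \<in> borel_measurable M"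
        using BsSS gsm fm by auto
      show ?thesis unfolding E_def by measurable
    qed
    have Efin: "emeasure M (E k) < \<infinity>" for k
      using emeasure_mono[of "E k" "Bs (SS k) k" M] BsSS[of k] by (auto simp: E_def)
    have Elt: "emeasure M (E k) < ennreal ((1/2)^k)" for k
      using pick[of "SS k" k] SSA[of k] unfolding E_def gs_def by auto
    have Ele: "measure M (E k) \<le> (1/2)^k" for k
    proof -
      have "ennreal (measure M (E k)) = emeasure M (E k)"
        using Efin[of k] by (simp add: emeasure_eq_ennreal_measure less_top[symmetric])
      with Elt[of k] have "ennreal (measure M (E k)) < ennreal ((1/2)^k)" by simp
      then show ?thesis by (simp add: ennreal_less_iff less_imp_le)
    qed
    have summ: "summable (\<lambda>k. measure M (E k))"
      by (rule summable_comparison_test'[where g="\<lambda>k. (1/2::real)^k"])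
         (use Ele in \<open>auto intro: summable_geometric\<close>)
    have bc: "AE x in M. eventually (\<lambda>k. x \<in> space M - E k) sequentially"
      by (rule borel_cantelli_AE1) (use Es Efin summ in auto)
    have "AE x in M. (\<lambda>n. gs n x) \<longlonglongrightarrow> f x"
      using bc
    proof eventually_elim
      case (elim x)
      then have xs: "x \<in> space M" by (auto dest: eventually_happens)
      show ?case
      proof (cases "(\<exists>m. x \<in> Cv f m) \<or> (\<exists>j m. x \<in> Cv (gs j) m)")
        case True
        have inB: "eventually (\<lambda>k. x \<in> Bs (SS k) k) sequentially"
        proof -
          from True show ?thesis
          proof
            assume "\<exists>m. x \<in> Cv f m"
            then obtain m where "x \<in> Cv f m" by auto
            then have "x \<in> Bs (SS k) k" if "k \<ge> m" for k
              using that unfolding Bs_def W_def by auto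
            then show ?thesis by (auto simp: eventually_sequentially)
          next
            assume "\<exists>j m. x \<in> Cv (gs j) m"
            then obtain j m where xm: "x \<in> Cv (gs j) m" by auto
            have "x \<in> Bs (SS k) k" if "k \<ge> max m (Suc j)" for k
              using that gsin[of j k] xm unfolding Bs_def W_def by auto
            then show ?thesis unfolding eventually_sequentially by blast
          qed
        qed
        have "eventually (\<lambda>k. \<bar>gs k x - f x\<bar> \<le> 1 / real (Suc k)) sequentially"
          using inB elim
        proof eventually_elim
          case (elim k) then show ?case by (auto simp: E_def)
        qed
        then have "eventually (\<lambda>k. norm (gs k x - f x) \<le> 1 / real (Suc k)) sequentially"
          by simp
        moreover have "(\<lambda>k. 1 / real (Suc k)) \<longlonglongrightarrow> 0"
          using LIMSEQ_inverse_real_of_nat by (simp add: inverse_eq_divide)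
        ultimately have "(\<lambda>k. gs k x - f x) \<longlonglongrightarrow> 0"
          by (rule Lim_null_comparison)
        then show ?thesis by (simp add: LIM_zero_iff)
      next
        case False
        have "f x = 0" using Cv[OF f] False xs by blast
        moreover have "gs k x = 0" for k using Cv[OF gss[of k]] False xs by blast
        ultimately show ?thesis by simp
      qed
    qed
    then show "f \<in> A" using H gsA f by blast
  qed
qed

end
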